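(* Let $X \subseteq \mathbb{P}^1 \times \mathbb{P}^1$ be any finite set of points, and let $I_X = \bigcap_{P \in X} I_P \subseteq k[x_0,x_1,x_2,x_3]$. Then $I_X$ (viewed as the ideal of a union of lines in $\mathbb{P}^3$ via the standard grading) is a local complete intersection.
   Context: $k$ is an algebraically closed field of characteristic zero. The coordinate ring of $\mathbb{P}^1\times\mathbb{P}^1$ is $S = k[x_0,x_1,x_2,x_3]$ with bigrading $\deg x_0 = \deg x_1 = (1,0)$, $\deg x_2 = \deg x_3 = (0,1)$. A point $P = [a_0:a_1]\times[b_0:b_1]$ has ideal $I_P = (a_1x_0 - a_0x_1,\ b_1x_2 - b_0x_3)$. An ideal $I \subseteq S$ of height $c$ is a local complete intersection if for every prime $\mathfrak{p} \neq (x_0,\ldots,x_3)$ with $I\subseteq\mathfrak{p}$, $I_{\mathfrak{p}}$ is a complete intersection of codimension $c$. *)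

theory Defs
  imports "HOL-Computational_Algebra.Polynomial" "HOL-Library.Extended_Nat"
begin

text \<open>The polynomial ring S = k[x0,x1,x2,x3], realised as iterated univariate
  polynomials: x3 is the outermost variable, x0 the innermost one.\<close>

type_synonym 'k S4 = "'k poly poly poly poly"

definition cst :: "'k::field \<Rightarrow> 'k S4" where
  "cst c = [:[:[:[:c:]:]:]:]"

definition x0 :: "'k::field S4" where "x0 = [:[:[:[:0, 1:]:]:]:]"
definition x1 :: "'k::field S4" where "x1 = [:[:[:0, 1:]:]:]"
definition x2 :: "'k::field S4" where "x2 = [:[:0, 1:]:]"
definition x3 :: "'k::field S4" where "x3 = [:0, 1:]"

definition is_ideal :: "'a::comm_ring_1 set \<Rightarrow> bool" where
  "is_ideal I \<longleftrightarrow> 0 \<in> I \<and> (\<forall>a\<in>I. \<forall>b\<in>I. a + b \<in> I) \<and> (\<forall>a\<in>I. \<forall>r. r * a \<in> I)"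

definition is_prime_ideal :: "'a::comm_ring_1 set \<Rightarrow> bool" where
  "is_prime_ideal P \<longleftrightarrow> is_ideal P \<and> P \<noteq> UNIV \<and> (\<forall>a b. a * b \<in> P \<longrightarrow> a \<in> P \<or> b \<in> P)"

definition ideal_gen :: "'a::comm_ring_1 set \<Rightarrow> 'a set" where
  "ideal_gen G = \<Inter>{I. is_ideal I \<and> G \<subseteq> I}"

definition prime_chain :: "'a::comm_ring_1 set list \<Rightarrow> bool" where
  "prime_chain Ps \<longleftrightarrow> Ps \<noteq> [] \<and> (\<forall>Q\<in>set Ps. is_prime_ideal Q) \<and>
     (\<forall>i. Suc i < length Ps \<longrightarrow> Ps ! i \<subset> Ps ! Suc i)"

definition prime_height :: "'a::comm_ring_1 set \<Rightarrow> enat" where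
  "prime_height P = (SUP Ps \<in> {Ps. prime_chain Ps \<and> last Ps = P}. enat (length Ps - 1))"

text \<open>Height of an ideal: minimum height of a prime containing it
  (\<infinity> for the unit ideal).\<close>
definition ideal_height :: "'a::comm_ring_1 set \<Rightarrow> enat" where
  "ideal_height I = (INF Q \<in> {Q. is_prime_ideal Q \<and> I \<subseteq> Q}. prime_height Q)"

text \<open>Height of the localisation I_P in the local ring S_P: primes of S_P containing
  I_P correspond to primes Q of S with I \<subseteq> Q \<subseteq> P, with the same height.\<close>
definition local_height :: "'a::comm_ring_1 set \<Rightarrow> 'a set \<Rightarrow> enat" where
  "local_height I P = (INF Q \<in> {Q. is_prime_ideal Q \<and> I \<subseteq> Q \<and> Q \<subseteq> P}. prime_height Q)"

text \<open>I_P is a complete intersection of codimension c in S_P: I_P is generated by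
  c elements f_1..f_c (which may be taken in I, after clearing unit denominators),
  i.e. I S_P = (f_1,...,f_c) S_P, and ht(I_P) = c.\<close>
definition local_ci :: "'a::comm_ring_1 set \<Rightarrow> 'a set \<Rightarrow> nat \<Rightarrow> bool" where
  "local_ci I P c \<longleftrightarrow>
     (\<exists>F. finite F \<and> card F \<le> c \<and> F \<subseteq> I \<and>
          (\<forall>g\<in>I. \<exists>t. t \<notin> P \<and> t * g \<in> ideal_gen F)) \<and>
     local_height I P = enat c"

definition irrelevant :: "'k::field S4 set" where
  "irrelevant = ideal_gen {x0, x1, x2, x3}"

definition lci :: "'k::field S4 set \<Rightarrow> bool" where
  "lci I \<longleftrightarrow> (\<forall>c. ideal_height I = enat c \<longrightarrow>
     (\<forall>P. is_prime_ideal P \<and> P \<noteq> irrelevant \<and> I \<subseteq> P \<longrightarrow> local_ci I P c))"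

definition point_ideal :: "('k::field \<times> 'k) \<Rightarrow> ('k \<times> 'k) \<Rightarrow> 'k S4 set" where
  "point_ideal a b = ideal_gen {cst (snd a) * x0 - cst (fst a) * x1,
                                 cst (snd b) * x2 - cst (fst b) * x3}"

definition valid_point :: "('k::field \<times> 'k) \<times> ('k \<times> 'k) \<Rightarrow> bool" where
  "valid_point p \<longleftrightarrow> fst p \<noteq> (0, 0) \<and> snd p \<noteq> (0, 0)"

definition points_ideal :: "(('k::field \<times> 'k) \<times> ('k \<times> 'k)) set \<Rightarrow> 'k S4 set" where
  "points_ideal X = (\<Inter>p\<in>X. point_ideal (fst p) (snd p))"

end

theory Submission
  imports Defs
begin


definition rhom :: "('a::comm_ring_1 \<Rightarrow> 'b::comm_ring_1) \<Rightarrow> bool" where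
  "rhom h \<longleftrightarrow> (\<forall>a b. h (a+b) = h a + h b) \<and> (\<forall>a b. h (a*b) = h a * h b) \<and> h 1 = 1"

lemma rhom_add: "rhom h \<Longrightarrow> h (a+b) = h a + h b" by (simp add: rhom_def)
lemma rhom_mult: "rhom h \<Longrightarrow> h (a*b) = h a * h b" by (simp add: rhom_def)
lemma rhom_one: "rhom h \<Longrightarrow> h 1 = 1" by (simp add: rhom_def)
lemma rhom_zero: "rhom h \<Longrightarrow> h 0 = 0"
  using rhom_add[of h 0 0] by simp
lemma rhom_uminus: "rhom h \<Longrightarrow> h (-a) = - h a"
  using rhom_add[of h a "-a"] rhom_zero[of h] minus_unique[of "h a" "h (-a)"] by simp
lemma rhom_diff: "rhom h \<Longrightarrow> h (a-b) = h a - h b"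
  using rhom_add[of h a "-b"] rhom_uminus[of h b] by simp
lemma rhom_prod: "rhom h \<Longrightarrow> h (prod f A) = prod (\<lambda>x. h (f x)) A"
  by (induction A rule: infinite_finite_induct) (auto simp: rhom_one rhom_mult)
lemma rhom_sum: "rhom h \<Longrightarrow> h (sum f A) = sum (\<lambda>x. h (f x)) A"
  by (induction A rule: infinite_finite_induct) (auto simp: rhom_zero rhom_add)
lemma rhom_comp: "rhom g \<Longrightarrow> rhom h \<Longrightarrow> rhom (g \<circ> h)"
  by (simp add: rhom_def)

definition ev :: "('a::comm_ring_1 \<Rightarrow> 'b::comm_ring_1) \<Rightarrow> 'b \<Rightarrow> 'a poly \<Rightarrow> 'b" where
  "ev h y p = poly (map_poly h p) y"

lemma ev_pCons: "h 0 = 0 \<Longrightarrow> ev h y (pCons a p) = h a + y * ev h y p"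
  by (simp add: ev_def map_poly_pCons)

lemma ev_const: "h 0 = 0 \<Longrightarrow> ev h y [:a:] = h a"
  using ev_pCons[of h y a 0] by (simp add: ev_def)

lemma ev_add: "rhom h \<Longrightarrow> ev h y (p + q) = ev h y p + ev h y q"
proof -
  assume h: "rhom h"
  have "map_poly h (p + q) = map_poly h p + map_poly h q"
    by (rule poly_eqI) (simp add: coeff_map_poly rhom_zero[OF h] rhom_add[OF h])
  then show ?thesis by (simp add: ev_def)
qed

lemma ev_smult: "rhom h \<Longrightarrow> ev h y (smult a p) = h a * ev h y p"
  by (simp add: ev_def map_poly_smult rhom_zero rhom_mult)

lemma ev_mult: "rhom h \<Longrightarrow> ev h y (p * q) = ev h y p * ev h y q"
proof (induction p)
  case 0
  then show ?case by (simp add: ev_def)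
next
  case (pCons a p)
  have "ev h y (pCons a p * q) = ev h y (smult a q + pCons 0 (p * q))"
    by simp
  also have "\<dots> = h a * ev h y q + y * (ev h y p * ev h y q)"
    using pCons by (simp add: ev_add ev_smult ev_pCons rhom_zero)
  also have "\<dots> = ev h y (pCons a p) * ev h y q"
    using pCons by (simp add: ev_pCons rhom_zero algebra_simps)
  finally show ?case .
qed

lemma rhom_ev: "rhom h \<Longrightarrow> rhom (ev h y)"
  unfolding rhom_def[of "ev h y"]
  by (auto simp: ev_add ev_mult ev_const rhom_zero rhom_one simp flip: pCons_one)

lemma pCons_as_sum: "pCons a (p::'a::comm_ring_1 poly) = [:a:] + [:0,1:] * p"
  by (simp add: mult_pCons_left)

lemma poly_gen_induct:
  fixes p :: "'a::comm_ring_1 poly"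
  assumes "\<And>a. Q [:a:]" "Q [:0,1:]" "\<And>p q. Q p \<Longrightarrow> Q q \<Longrightarrow> Q (p+q)"
    "\<And>p q. Q p \<Longrightarrow> Q q \<Longrightarrow> Q (p*q)"
  shows "Q p"
proof (induction p)
  case 0
  then show ?case using assms(1)[of 0] by simp
next
  case (pCons a p)
  show ?case
    apply (subst pCons_as_sum)
    using assms(3)[OF assms(1) assms(4)[OF assms(2) pCons.IH]] .
qed

lemma const_add: "[:a + b:] = [:a:] + [:b:]" by simp
lemma const_mult: "[:a * b:] = [:a:] * [:b:]" by (simp add: mult.commute)

lemma S4_induct:
  fixes P :: "'k::field S4 \<Rightarrow> bool"
  assumes c: "\<And>c. P (cst c)" and v: "P x0" "P x1" "P x2" "P x3"
    and ad: "\<And>a b. P a \<Longrightarrow> P b \<Longrightarrow> P (a+b)"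
    and mu: "\<And>a b. P a \<Longrightarrow> P b \<Longrightarrow> P (a*b)"
  shows "P f"
proof -
  have l4: "P [:[:[:c:]:]:]" for c
    apply (rule poly_gen_induct[where Q="\<lambda>c. P [:[:[:c:]:]:]"])
       apply (use c in \<open>simp add: cst_def\<close>)
      apply (use v in \<open>simp add: x0_def\<close>)
     subgoal for p q using ad[of "[:[:[:p:]:]:]" "[:[:[:q:]:]:]"] by simp
    subgoal for p q using mu[of "[:[:[:p:]:]:]" "[:[:[:q:]:]:]"] by (simp add: mult.commute)
    done
  have l3: "P [:[:b:]:]" for b
    apply (rule poly_gen_induct[where Q="\<lambda>c. P [:[:c:]:]"])
       apply (use l4 in simp)
      apply (use v in \<open>simp add: x1_def\<close>)
     subgoal for p q using ad[of "[:[:p:]:]" "[:[:q:]:]"] by simp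
    subgoal for p q using mu[of "[:[:p:]:]" "[:[:q:]:]"] by (simp add: mult.commute)
    done
  have l2: "P [:b:]" for b
    apply (rule poly_gen_induct[where Q="\<lambda>c. P [:c:]"])
       apply (use l3 in simp)
      apply (use v in \<open>simp add: x2_def\<close>)
     subgoal for p q using ad[of "[:p:]" "[:q:]"] by simp
    subgoal for p q using mu[of "[:p:]" "[:q:]"] by (simp add: mult.commute)
    done
  show ?thesis
    apply (rule poly_gen_induct[where Q="P"])
       apply (use l2 in simp)
      apply (use v in \<open>simp add: x3_def\<close>)
     apply (metis ad)
    apply (metis mu)
    done
qed



lemma ev_zero[simp]: "ev h y 0 = 0" by (simp add: ev_def)
lemma ev_one[simp]: "h 1 = 1 \<Longrightarrow> h 0 = 0 \<Longrightarrow> ev h y 1 = 1"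
  using ev_const[of h y 1] by (simp add: one_pCons)
lemma rhom_id: "rhom id" by (simp add: rhom_def)
lemma less4: "(i::nat) < 4 \<longleftrightarrow> i = 0 \<or> i = 1 \<or> i = 2 \<or> i = 3" by auto

lemma cst_zero[simp]: "cst 0 = 0" by (simp add: cst_def)
lemma cst_one[simp]: "cst 1 = 1" by (simp add: cst_def one_pCons)
lemma cst_add: "cst (a + b) = cst a + cst b" by (simp add: cst_def)
lemma cst_mult: "cst (a * b) = cst a * cst b" by (simp add: cst_def mult.commute)
lemma rhom_cst: "rhom (cst :: 'k::field \<Rightarrow> 'k S4)"
  by (simp add: rhom_def cst_add cst_mult)

definition xv :: "nat \<Rightarrow> 'k::field S4" where
  "xv i = (if i = 0 then x0 else if i = 1 then x1 else if i = 2 then x2 else x3)"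

definition subst :: "(nat \<Rightarrow> 'k::field S4) \<Rightarrow> 'k S4 \<Rightarrow> 'k S4" where
  "subst y = ev (ev (ev (ev cst (y 0)) (y 1)) (y 2)) (y 3)"

lemma rhom_subst: "rhom (subst y)"
  unfolding subst_def by (intro rhom_ev rhom_cst)

lemma subst_cst[simp]: "subst y (cst c) = cst c"
  unfolding subst_def by (simp add: cst_def ev_const)

lemma subst_x0[simp]: "subst y x0 = y 0"
  unfolding subst_def by (simp add: x0_def ev_const ev_pCons)
lemma subst_x1[simp]: "subst y x1 = y 1"
  unfolding subst_def by (simp add: x1_def ev_const ev_pCons)
lemma subst_x2[simp]: "subst y x2 = y 2"
  unfolding subst_def by (simp add: x2_def ev_const ev_pCons)
lemma subst_x3[simp]: "subst y x3 = y 3"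
  unfolding subst_def by (simp add: x3_def ev_const ev_pCons)

lemma subst_xv: "i < 4 \<Longrightarrow> subst y (xv i) = y i"
  unfolding less4 by (auto simp: xv_def)

lemma rhom_unique:
  fixes g h :: "'k::field S4 \<Rightarrow> 'k S4"
  assumes "rhom g" "rhom h" "\<And>c. g (cst c) = h (cst c)" "\<And>i. i < 4 \<Longrightarrow> g (xv i) = h (xv i)"
  shows "g f = h f"
proof (induction f rule: S4_induct)
  case (1 c) then show ?case using assms(3) .
next
  case 2 then show ?case using assms(4)[of 0] by (simp add: xv_def)
next
  case 3 then show ?case using assms(4)[of 1] by (simp add: xv_def)
next
  case 4 then show ?case using assms(4)[of 2] by (simp add: xv_def)
next
  case 5 then show ?case using assms(4)[of 3] by (simp add: xv_def)
next
  case (6 a b) then show ?case by (simp add: rhom_add assms(1,2))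
next
  case (7 a b) then show ?case by (simp add: rhom_mult assms(1,2))
qed

lemma subst_comp:
  assumes "rhom \<sigma>" "\<And>c. \<sigma> (cst c) = cst c"
  shows "\<sigma> (subst y f) = subst (\<lambda>i. \<sigma> (y i)) f"
  using rhom_unique[of "\<sigma> \<circ> subst y" "subst (\<lambda>i. \<sigma> (y i))"]
  by (simp add: rhom_comp rhom_subst assms subst_xv)

lemma subst_id: "subst xv f = f"
  using rhom_unique[of "subst xv" id, OF rhom_subst rhom_id] by (simp add: subst_xv)

lemma subst_cong: "(\<And>i. i < 4 \<Longrightarrow> y i = z i) \<Longrightarrow> subst y = subst z"
  unfolding subst_def by simp

definition LC :: "(nat \<Rightarrow> 'k::field) \<Rightarrow> 'k S4" where
  "LC c = (\<Sum>j<4. cst (c j) * xv j)"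

lemma LC_cong: "(\<And>k. k < 4 \<Longrightarrow> c k = d k) \<Longrightarrow> LC c = LC d"
  unfolding LC_def by (rule sum.cong) auto

lemma subst_LC: "subst y (LC c) = (\<Sum>j<4. cst (c j) * y j)"
  unfolding LC_def by (simp add: rhom_sum[OF rhom_subst] rhom_mult[OF rhom_subst] subst_xv)

lemma sum_cst_LC: "(\<Sum>j<4. cst (c j) * LC (M j)) = LC (\<lambda>k. \<Sum>j<4. c j * M j k)"
proof -
  have "(\<Sum>j<4. cst (c j) * LC (M j)) = (\<Sum>j<4. \<Sum>k<4. cst (c j * M j k) * xv k)"
    unfolding LC_def by (simp add: sum_distrib_left cst_mult mult.assoc)
  also have "\<dots> = (\<Sum>k<4. \<Sum>j<4. cst (c j * M j k) * xv k)"
    by (rule sum.swap)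
  also have "\<dots> = LC (\<lambda>k. \<Sum>j<4. c j * M j k)"
    unfolding LC_def by (simp add: sum_distrib_right rhom_sum[OF rhom_cst])
  finally show ?thesis .
qed

lemma LC_unit: "i < 4 \<Longrightarrow> LC (\<lambda>k. if k = i then 1 else 0) = xv i"
proof -
  assume i: "i < 4"
  have "LC (\<lambda>k. if k = i then 1 else 0) = (\<Sum>k<4. if k = i then xv k else 0)"
    unfolding LC_def by (rule sum.cong) auto
  also have "\<dots> = xv i" using i by (simp add: sum.delta)
  finally show ?thesis .
qed

lemma aut_mats:
  assumes NM: "\<And>i k. i < 4 \<Longrightarrow> k < 4 \<Longrightarrow> (\<Sum>j<4. N i j * M j k) = (if k = i then 1 else 0)"
  shows "subst (\<lambda>i. LC (M i)) (subst (\<lambda>i. LC (N i)) f) = f"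
proof -
  have "subst (\<lambda>i. LC (M i)) (subst (\<lambda>i. LC (N i)) f) =
        subst (\<lambda>i. subst (\<lambda>i. LC (M i)) (LC (N i))) f"
    by (rule subst_comp) (simp_all add: rhom_subst)
  also have "subst (\<lambda>i. subst (\<lambda>i. LC (M i)) (LC (N i))) = subst xv"
  proof (rule subst_cong)
    fix i :: nat assume i: "i < 4"
    have "subst (\<lambda>i. LC (M i)) (LC (N i)) = LC (\<lambda>k. \<Sum>j<4. N i j * M j k)"
      by (simp add: subst_LC sum_cst_LC)
    also have "\<dots> = LC (\<lambda>k. if k = i then 1 else 0)"
      by (rule LC_cong) (simp add: NM i)
    also have "\<dots> = xv i" using i by (rule LC_unit)
    finally show "subst (\<lambda>i. LC (M i)) (LC (N i)) = xv i" .
  qed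
  finally show ?thesis by (simp add: subst_id)
qed



section \<open>Ideals\<close>

lemma ideal_gen_ideal: "is_ideal (ideal_gen G)"
  unfolding ideal_gen_def is_ideal_def by auto

lemma ideal_gen_sub: "G \<subseteq> ideal_gen G"
  unfolding ideal_gen_def by auto

lemma ideal_gen_min: "is_ideal I \<Longrightarrow> G \<subseteq> I \<Longrightarrow> ideal_gen G \<subseteq> I"
  unfolding ideal_gen_def by auto

lemma ideal_zero: "is_ideal I \<Longrightarrow> 0 \<in> I" by (simp add: is_ideal_def)
lemma ideal_add: "is_ideal I \<Longrightarrow> a \<in> I \<Longrightarrow> b \<in> I \<Longrightarrow> a + b \<in> I" by (simp add: is_ideal_def)
lemma ideal_mult: "is_ideal I \<Longrightarrow> a \<in> I \<Longrightarrow> r * a \<in> I" by (simp add: is_ideal_def)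
lemma ideal_mult_r: "is_ideal I \<Longrightarrow> a \<in> I \<Longrightarrow> a * r \<in> I"
  using ideal_mult[of I a r] by (simp add: mult.commute)
lemma ideal_uminus: "is_ideal I \<Longrightarrow> a \<in> I \<Longrightarrow> - a \<in> I"
  using ideal_mult[of I a "-1"] by simp
lemma ideal_diff: "is_ideal I \<Longrightarrow> a \<in> I \<Longrightarrow> b \<in> I \<Longrightarrow> a - b \<in> I"
  using ideal_add[of I a "-b"] ideal_uminus[of I b] by simp

lemma ideal_gen_pair:
  fixes f g :: "'a::comm_ring_1"
  shows "x \<in> ideal_gen {f, g} \<longleftrightarrow> (\<exists>r s. x = r * f + s * g)"
proof
  let ?J = "{x. \<exists>r s. x = r * f + s * g}"
  have J: "is_ideal ?J"
    unfolding is_ideal_def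
  proof (intro conjI ballI allI)
    have "0 = 0 * f + 0 * g" by simp
    then show "0 \<in> ?J" by blast
  next
    fix a b assume "a \<in> ?J" "b \<in> ?J"
    then obtain r s r' s' where "a = r * f + s * g" "b = r' * f + s' * g" by auto
    then have "a + b = (r + r') * f + (s + s') * g" by (simp add: algebra_simps)
    then show "a + b \<in> ?J" by blast
  next
    fix a t assume "a \<in> ?J"
    then obtain r s where "a = r * f + s * g" by auto
    then have "t * a = (t * r) * f + (t * s) * g" by (simp add: algebra_simps)
    then show "t * a \<in> ?J" by blast
  qed
  have "f = 1 * f + 0 * g" by simp
  then have "f \<in> ?J" by blast
  moreover have "g = 0 * f + 1 * g" by simp
  then have "g \<in> ?J" by blast
  ultimately have "ideal_gen {f, g} \<subseteq> ?J" using J by (intro ideal_gen_min) auto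
  then show "x \<in> ideal_gen {f, g} \<Longrightarrow> \<exists>r s. x = r * f + s * g" by auto
next
  assume "\<exists>r s. x = r * f + s * g"
  then obtain r s where x: "x = r * f + s * g" by auto
  have "f \<in> ideal_gen {f, g}" "g \<in> ideal_gen {f,g}" using ideal_gen_sub[of "{f,g}"] by auto
  then show "x \<in> ideal_gen {f, g}" unfolding x
    by (intro ideal_add ideal_mult ideal_gen_ideal)
qed

lemma ideal_gen_single:
  fixes f :: "'a::comm_ring_1"
  shows "x \<in> ideal_gen {f} \<longleftrightarrow> (\<exists>r. x = r * f)"
proof -
  have "(\<exists>r s. x = r * f + s * f) \<longleftrightarrow> (\<exists>r. x = r * f)"
  proof
    assume "\<exists>r s. x = r * f + s * f"
    then obtain r s where "x = r * f + s * f" by auto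
    then have "x = (r + s) * f" by (simp add: algebra_simps)
    then show "\<exists>r. x = r * f" by blast
  next
    assume "\<exists>r. x = r * f"
    then obtain r where "x = r * f" by auto
    then have "x = r * f + 0 * f" by simp
    then show "\<exists>r s. x = r * f + s * f" by blast
  qed
  then show ?thesis using ideal_gen_pair[of x f f] by simp
qed

section \<open>Automorphisms\<close>

definition isaut :: "('a::comm_ring_1 \<Rightarrow> 'a) \<Rightarrow> ('a \<Rightarrow> 'a) \<Rightarrow> bool" where
  "isaut \<sigma> \<tau> \<longleftrightarrow> rhom \<sigma> \<and> rhom \<tau> \<and> (\<forall>f. \<sigma> (\<tau> f) = f) \<and> (\<forall>f. \<tau> (\<sigma> f) = f)"

lemma isaut_sym: "isaut \<sigma> \<tau> \<Longrightarrow> isaut \<tau> \<sigma>" by (auto simp: isaut_def)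

lemma aut_image_iff: "isaut \<sigma> \<tau> \<Longrightarrow> x \<in> \<sigma> ` A \<longleftrightarrow> \<tau> x \<in> A"
proof
  assume a: "isaut \<sigma> \<tau>" "x \<in> \<sigma> ` A"
  then obtain y where "y \<in> A" "x = \<sigma> y" by auto
  then show "\<tau> x \<in> A" using a(1) by (simp add: isaut_def)
next
  assume a: "isaut \<sigma> \<tau>" "\<tau> x \<in> A"
  then have "x = \<sigma> (\<tau> x)" by (simp add: isaut_def)
  then show "x \<in> \<sigma> ` A" using a(2) by blast
qed

lemma aut_ideal: assumes "isaut \<sigma> \<tau>" "is_ideal I" shows "is_ideal (\<sigma> ` I)"
proof -
  have h: "rhom \<sigma>" "rhom \<tau>" using assms(1) by (auto simp: isaut_def)
  note iff = aut_image_iff[OF assms(1)]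
  show ?thesis unfolding is_ideal_def
  proof (intro conjI ballI allI)
    show "0 \<in> \<sigma> ` I" unfolding iff using assms(2) by (simp add: rhom_zero h ideal_zero)
  next
    fix a b assume "a \<in> \<sigma> ` I" "b \<in> \<sigma> ` I"
    then show "a + b \<in> \<sigma> ` I" unfolding iff using assms(2) by (simp add: rhom_add h ideal_add)
  next
    fix a r assume "a \<in> \<sigma> ` I"
    then show "r * a \<in> \<sigma> ` I" unfolding iff using assms(2) by (simp add: rhom_mult h ideal_mult)
  qed
qed

lemma aut_ideal_gen: assumes "isaut \<sigma> \<tau>" shows "\<sigma> ` ideal_gen G = ideal_gen (\<sigma> ` G)"
proof
  show "ideal_gen (\<sigma> ` G) \<subseteq> \<sigma> ` ideal_gen G"
    by (intro ideal_gen_min aut_ideal[OF assms] ideal_gen_ideal image_mono ideal_gen_sub)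
next
  have t: "isaut \<tau> \<sigma>" using assms by (rule isaut_sym)
  have "G \<subseteq> \<tau> ` ideal_gen (\<sigma> ` G)"
    using ideal_gen_sub[of "\<sigma> ` G"] aut_image_iff[OF t] by auto
  then have "ideal_gen G \<subseteq> \<tau> ` ideal_gen (\<sigma> ` G)"
    by (intro ideal_gen_min aut_ideal[OF t] ideal_gen_ideal)
  then show "\<sigma> ` ideal_gen G \<subseteq> ideal_gen (\<sigma> ` G)"
    using aut_image_iff[OF t] assms by (auto simp: isaut_def)
qed

lemma aut_prime: assumes "isaut \<sigma> \<tau>" "is_prime_ideal P" shows "is_prime_ideal (\<sigma> ` P)"
proof -
  have h: "rhom \<sigma>" "rhom \<tau>" using assms(1) by (auto simp: isaut_def)
  have "\<exists>x. x \<notin> P" using assms(2) by (auto simp: is_prime_ideal_def)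
  then obtain x where "x \<notin> P" by auto
  note iff = aut_image_iff[OF assms(1)]
  then have x: "\<sigma> x \<notin> \<sigma> ` P" unfolding iff using assms(1) \<open>x \<notin> P\<close> by (simp add: isaut_def)
  show ?thesis unfolding is_prime_ideal_def
  proof (intro conjI allI impI)
    show "is_ideal (\<sigma> ` P)" using assms(2) by (intro aut_ideal[OF assms(1)]) (simp add: is_prime_ideal_def)
    show "\<sigma> ` P \<noteq> UNIV" using x by auto
    fix a b assume "a * b \<in> \<sigma> ` P"
    then have "\<tau> a * \<tau> b \<in> P" unfolding iff by (simp add: rhom_mult h)
    then show "a \<in> \<sigma> ` P \<or> b \<in> \<sigma> ` P" unfolding iff using assms(2) by (simp add: is_prime_ideal_def)
  qed
qed

lemma aut_inj: "isaut \<sigma> \<tau> \<Longrightarrow> inj \<sigma>"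
  unfolding isaut_def by (metis injI)

lemma aut_height_le: assumes "isaut \<sigma> \<tau>" shows "prime_height P \<le> prime_height (\<sigma> ` P)"
  unfolding prime_height_def
proof (rule SUP_least)
  fix Ps assume "Ps \<in> {Ps. prime_chain Ps \<and> last Ps = P}"
  then have Ps: "prime_chain Ps" "last Ps = P" by auto
  let ?Qs = "map ((`) \<sigma>) Ps"
  have inj: "inj \<sigma>" using assms by (rule aut_inj)
  have "prime_chain ?Qs"
    using Ps(1) unfolding prime_chain_def
    by (auto simp: aut_prime[OF assms] inj_image_subset_iff[OF inj] inj_image_eq_iff[OF inj] less_le)
  moreover have "last ?Qs = \<sigma> ` P" using Ps by (simp add: last_map prime_chain_def)
  ultimately have "enat (length ?Qs - 1) \<le> (SUP Ps \<in> {Ps. prime_chain Ps \<and> last Ps = \<sigma> ` P}. enat (length Ps - 1))"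
    by (intro SUP_upper) auto
  then show "enat (length Ps - 1) \<le> (SUP Ps \<in> {Ps. prime_chain Ps \<and> last Ps = \<sigma> ` P}. enat (length Ps - 1))"
    by simp
qed

lemma aut_height: assumes "isaut \<sigma> \<tau>" shows "prime_height (\<sigma> ` P) = prime_height P"
proof (rule antisym)
  have t: "isaut \<tau> \<sigma>" using assms by (rule isaut_sym)
  have "\<tau> ` \<sigma> ` P = P" using assms unfolding isaut_def by (simp add: image_comp)
  then show "prime_height (\<sigma> ` P) \<le> prime_height P"
    using aut_height_le[OF t, of "\<sigma> ` P"] by simp
qed (rule aut_height_le[OF assms])

lemma aut_Inter: assumes "isaut \<sigma> \<tau>" shows "\<sigma> ` (\<Inter>x\<in>X. J x) = (\<Inter>x\<in>X. \<sigma> ` J x)"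
  by (auto simp: aut_image_iff[OF assms])



definition lin :: "'k::field S4 \<Rightarrow> 'k S4 \<Rightarrow> 'k \<times> 'k \<Rightarrow> 'k S4" where
  "lin u v p = cst (snd p) * u - cst (fst p) * v"

lemma point_ideal_lin: "point_ideal a b = ideal_gen {lin x0 x1 a, lin x2 x3 b}"
  by (simp add: point_ideal_def lin_def)

lemma sum4: "(\<Sum>j<4. f j) = f 0 + f 1 + f 2 + f (3::nat)"
  by (simp add: eval_nat_numeral add.commute add.left_commute)

lemma LC_expand: "LC c = cst (c 0) * x0 + cst (c 1) * x1 + cst (c 2) * x2 + cst (c 3) * x3"
  by (simp add: LC_def sum4 xv_def)

lemma cst_uminus: "cst (- a) = - cst a" by (rule rhom_uminus[OF rhom_cst])
lemma cst_diff: "cst (a - b) = cst a - cst b" by (rule rhom_diff[OF rhom_cst])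

definition mat4 :: "'k list list \<Rightarrow> nat \<Rightarrow> nat \<Rightarrow> 'k" where
  "mat4 L i j = L ! i ! j"

lemma mat_aut:
  assumes "\<And>i k. i < 4 \<Longrightarrow> k < 4 \<Longrightarrow> (\<Sum>j<4. N i j * M j k) = (if k = i then 1 else 0)"
    and "\<And>i k. i < 4 \<Longrightarrow> k < 4 \<Longrightarrow> (\<Sum>j<4. M i j * N j k) = (if k = i then 1 else 0)"
  shows "isaut (subst (\<lambda>i. LC (M i))) (subst (\<lambda>i. LC (N i)))"
  unfolding isaut_def using aut_mats[OF assms(1)] aut_mats[OF assms(2)] by (simp add: rhom_subst)

definition cmp :: "'k::field \<times> 'k \<Rightarrow> 'k \<times> 'k" where
  "cmp p = (if snd p \<noteq> 0 then (0, 1) else (1, 0))"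

definition dt :: "'k::field \<times> 'k \<Rightarrow> 'k" where
  "dt p = snd p * snd (cmp p) + fst p * fst (cmp p)"

lemma dt_nz: "p \<noteq> (0, 0) \<Longrightarrow> dt p \<noteq> 0"
  by (cases p) (auto simp: dt_def cmp_def)

definition TM :: "'k::field \<times> 'k \<Rightarrow> nat \<Rightarrow> nat \<Rightarrow> 'k" where
  "TM a = (let r = cmp a in mat4 [[0,0,1,0],[0,0,0,1],[fst r, snd r,0,0],[snd a, - fst a,0,0]])"
definition TN :: "'k::field \<times> 'k \<Rightarrow> nat \<Rightarrow> nat \<Rightarrow> 'k" where
  "TN a = (let r = cmp a; D = dt a in
     mat4 [[0,0,fst a/D, snd r/D],[0,0,snd a/D, - fst r/D],[1,0,0,0],[0,1,0,0]])"

lemma T_aut: assumes "a \<noteq> (0,0)"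
  shows "isaut (subst (\<lambda>i. LC (TM a i))) (subst (\<lambda>i. LC (TN a i)))"
proof (rule mat_aut)
  have D: "dt a \<noteq> 0" using assms by (rule dt_nz)
  fix i k :: nat assume "i < 4" "k < 4"
  then show "(\<Sum>j<4. TN a i j * TM a j k) = (if k = i then 1 else 0)"
    "(\<Sum>j<4. TM a i j * TN a j k) = (if k = i then 1 else 0)"
    using D unfolding less4
    by (auto simp: sum4 TM_def TN_def mat4_def Let_def field_simps) (auto simp: dt_def algebra_simps)
qed

lemma T_img:
  "subst (\<lambda>i. LC (TM a i)) x0 = x2"
  "subst (\<lambda>i. LC (TM a i)) x1 = x3"
  "subst (\<lambda>i. LC (TM a i)) x3 = lin x0 x1 a"
  by (simp_all add: TM_def mat4_def LC_expand lin_def cst_uminus Let_def)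

definition SM :: "'k::field \<times> 'k \<Rightarrow> nat \<Rightarrow> nat \<Rightarrow> 'k" where
  "SM a = (let r = cmp a in mat4 [[1,0,0,0],[0,1,0,0],[0,0,fst r, snd r],[0,0,snd a, - fst a]])"
definition SN :: "'k::field \<times> 'k \<Rightarrow> nat \<Rightarrow> nat \<Rightarrow> 'k" where
  "SN a = (let r = cmp a; D = dt a in
     mat4 [[1,0,0,0],[0,1,0,0],[0,0,fst a/D, snd r/D],[0,0,snd a/D, - fst r/D]])"

lemma S_aut: assumes "a \<noteq> (0,0)"
  shows "isaut (subst (\<lambda>i. LC (SM a i))) (subst (\<lambda>i. LC (SN a i)))"
proof (rule mat_aut)
  have D: "dt a \<noteq> 0" using assms by (rule dt_nz)
  fix i k :: nat assume "i < 4" "k < 4"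
  then show "(\<Sum>j<4. SN a i j * SM a j k) = (if k = i then 1 else 0)"
    "(\<Sum>j<4. SM a i j * SN a j k) = (if k = i then 1 else 0)"
    using D unfolding less4
    by (auto simp: sum4 SM_def SN_def mat4_def Let_def field_simps) (auto simp: dt_def algebra_simps)
qed

lemma S_img:
  "subst (\<lambda>i. LC (SM a i)) x0 = x0"
  "subst (\<lambda>i. LC (SM a i)) x1 = x1"
  "subst (\<lambda>i. LC (SM a i)) x3 = lin x2 x3 a"
  by (simp_all add: SM_def mat4_def LC_expand lin_def cst_uminus Let_def)

definition PM :: "'k::field \<times> 'k \<Rightarrow> 'k \<times> 'k \<Rightarrow> nat \<Rightarrow> nat \<Rightarrow> 'k" where
  "PM a b = (let r = cmp a; s = cmp b in
     mat4 [[0,0,fst s,snd s],[fst r,snd r,0,0],[0,0,snd b,- fst b],[snd a,- fst a,0,0]])"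
definition PN :: "'k::field \<times> 'k \<Rightarrow> 'k \<times> 'k \<Rightarrow> nat \<Rightarrow> nat \<Rightarrow> 'k" where
  "PN a b = (let r = cmp a; s = cmp b; Da = dt a; Db = dt b in
     mat4 [[0,fst a/Da,0,snd r/Da],[0,snd a/Da,0,- fst r/Da],
           [fst b/Db,0,snd s/Db,0],[snd b/Db,0,- fst s/Db,0]])"

lemma P_aut: assumes "a \<noteq> (0,0)" "b \<noteq> (0,0)"
  shows "isaut (subst (\<lambda>i. LC (PM a b i))) (subst (\<lambda>i. LC (PN a b i)))"
proof (rule mat_aut)
  have D: "dt a \<noteq> 0" "dt b \<noteq> 0" using dt_nz[OF assms(1)] dt_nz[OF assms(2)] by auto
  fix i k :: nat assume "i < 4" "k < 4"
  then show "(\<Sum>j<4. PN a b i j * PM a b j k) = (if k = i then 1 else 0)"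
    "(\<Sum>j<4. PM a b i j * PN a b j k) = (if k = i then 1 else 0)"
    using D unfolding less4
    by (auto simp: sum4 PM_def PN_def mat4_def Let_def field_simps) (auto simp: dt_def algebra_simps)
qed

lemma P_img:
  "subst (\<lambda>i. LC (PM a b i)) x2 = lin x2 x3 b"
  "subst (\<lambda>i. LC (PM a b i)) x3 = lin x0 x1 a"
  by (simp_all add: PM_def mat4_def LC_expand lin_def cst_uminus Let_def)



definition K1 :: "'k::field S4 set" where "K1 = {f. coeff f 0 = 0}"
definition K2 :: "'k::field S4 set" where "K2 = {f. coeff (coeff f 0) 0 = 0}"

lemma K1_prime: "is_prime_ideal (K1 :: 'k::field S4 set)"
  unfolding is_prime_ideal_def is_ideal_def K1_def
  by (auto simp: coeff_mult_0 set_eq_iff intro!: exI[of _ 1])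

lemma K2_prime: "is_prime_ideal (K2 :: 'k::field S4 set)"
  unfolding is_prime_ideal_def is_ideal_def K2_def
  by (auto simp: coeff_mult_0 set_eq_iff intro!: exI[of _ 1])

lemma zero_prime: "is_prime_ideal ({0} :: 'k::field S4 set)"
  unfolding is_prime_ideal_def is_ideal_def
  by (auto simp: set_eq_iff intro!: exI[of _ 1])

lemma K2_eq: "K2 = ideal_gen {x2, x3 :: 'k::field S4}"
proof
  show "ideal_gen {x2, x3} \<subseteq> (K2 :: 'k S4 set)"
    using K2_prime unfolding is_prime_ideal_def
    by (intro ideal_gen_min) (auto simp: K2_def x2_def x3_def)
next
  show "K2 \<subseteq> ideal_gen {x2, x3 :: 'k S4}"
  proof
    fix f :: "'k S4" assume "f \<in> K2"
    then have f0: "coeff (coeff f 0) 0 = 0" by (simp add: K2_def)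
    obtain c q where f: "f = pCons c q" by (cases f)
    obtain c0 c' where c: "c = pCons c0 c'" by (cases c)
    have "c0 = 0" using f0 f c by simp
    then have "f = [:c':] * x2 + q * x3"
      using f c by (simp add: x2_def x3_def mult_pCons_left mult_pCons_right mult.commute)
    then show "f \<in> ideal_gen {x2, x3}" unfolding ideal_gen_pair by blast
  qed
qed

lemma height_K2: "enat 2 \<le> prime_height (K2 :: 'k::field S4 set)"
proof -
  let ?Ps = "[{0}, K1, K2 :: 'k S4 set]"
  have x3: "x3 \<in> K1" "x3 \<noteq> 0" by (auto simp: K1_def x3_def)
  have x2: "x2 \<in> K2" "x2 \<notin> K1" by (auto simp: K1_def K2_def x2_def)
  have "K1 \<subseteq> (K2 :: 'k S4 set)" by (auto simp: K1_def K2_def)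
  then have "prime_chain ?Ps"
    using x3 x2 K1_prime K2_prime zero_prime K1_prime
    unfolding prime_chain_def
    by (auto simp: less_Suc_eq nth_Cons' K1_def)
  then show ?thesis unfolding prime_height_def
    by (intro SUP_upper2[of ?Ps]) auto
qed

lemma height_mono:
  assumes "is_prime_ideal Q2" "Q1 \<subseteq> Q2"
  shows "prime_height Q1 \<le> prime_height Q2"
  unfolding prime_height_def
proof (rule SUP_least)
  fix Ps assume "Ps \<in> {Ps. prime_chain Ps \<and> last Ps = Q1}"
  then have Ps: "prime_chain Ps" "last Ps = Q1" by auto
  show "enat (length Ps - 1) \<le> (SUP Ps\<in>{Ps. prime_chain Ps \<and> last Ps = Q2}. enat (length Ps - 1))"
  proof (cases "Q1 = Q2")
    case True then show ?thesis using Ps by (intro SUP_upper) auto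
  next
    case False
    then have lt: "Q1 \<subset> Q2" using assms by auto
    let ?Qs = "Ps @ [Q2]"
    have ne: "Ps \<noteq> []" using Ps by (simp add: prime_chain_def)
    have "prime_chain ?Qs" unfolding prime_chain_def
    proof (intro conjI allI impI ballI)
      show "?Qs \<noteq> []" by simp
      fix Q assume "Q \<in> set ?Qs" then show "is_prime_ideal Q"
        using Ps assms by (auto simp: prime_chain_def)
    next
      fix i assume i: "Suc i < length ?Qs"
      show "?Qs ! i \<subset> ?Qs ! Suc i"
      proof (cases "Suc i < length Ps")
        case True then show ?thesis using Ps by (simp add: nth_append prime_chain_def)
      next
        case False
        then have "i = length Ps - 1" using i by simp
        then have "?Qs ! i = last Ps" "?Qs ! Suc i = Q2" using ne
          by (simp_all add: nth_append last_conv_nth)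
        then show ?thesis using Ps lt by simp
      qed
    qed
    then have "enat (length ?Qs - 1) \<le> (SUP Ps\<in>{Ps. prime_chain Ps \<and> last Ps = Q2}. enat (length Ps - 1))"
      by (intro SUP_upper) auto
    then show ?thesis by (rule order_trans[rotated]) simp
  qed
qed

lemma prime_avoid:
  assumes "finite X" "is_prime_ideal Q" "(\<Inter>p\<in>X. J p) \<subseteq> Q" "\<forall>p\<in>X. is_ideal (J p)"
  shows "\<exists>p\<in>X. J p \<subseteq> Q"
  using assms
proof (induction X rule: finite_induct)
  case empty then show ?case by (auto simp: is_prime_ideal_def)
next
  case (insert x X)
  show ?case
  proof (rule ccontr)
    assume nt: "\<not> ?thesis"
    then obtain a where a: "a \<in> J x" "a \<notin> Q" by auto
    have "\<not> (\<Inter>p\<in>X. J p) \<subseteq> Q" using insert nt by auto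
    then obtain b where b: "b \<in> (\<Inter>p\<in>X. J p)" "b \<notin> Q" by auto
    have "a * b \<in> J x" using a insert.prems by (auto intro: ideal_mult_r)
    moreover have "a * b \<in> J p" if "p \<in> X" for p
      using b that insert.prems by (auto intro: ideal_mult)
    ultimately have "a * b \<in> Q" using insert.prems(2) by auto
    then show False using a b insert.prems(1) by (auto simp: is_prime_ideal_def)
  qed
qed



lemma point_aut:
  assumes "a \<noteq> (0,0)" "b \<noteq> (0,0)"
  shows "subst (\<lambda>i. LC (PM a b i)) ` K2 = point_ideal a b"
  using aut_ideal_gen[OF P_aut[OF assms], of "{x2, x3}"]
  by (simp add: K2_eq P_img[simplified] point_ideal_lin insert_commute)

lemma point_prime:
  fixes a b :: "'k::field \<times> 'k"
  assumes "a \<noteq> (0,0)" "b \<noteq> (0,0)"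
  shows "is_prime_ideal (point_ideal a b)" "prime_height (point_ideal a b) = prime_height (K2 :: 'k S4 set)"
  using aut_prime[OF P_aut[OF assms] K2_prime] aut_height[OF P_aut[OF assms], of K2]
  by (simp_all add: point_aut[OF assms])

definition ev0 :: "'k::field S4 \<Rightarrow> 'k" where
  "ev0 f = coeff (coeff (coeff (coeff f 0) 0) 0) 0"

lemma ev0_add: "ev0 (a + b) = ev0 a + ev0 b" by (simp add: ev0_def)
lemma ev0_mult: "ev0 (a * b) = ev0 a * ev0 b" by (simp add: ev0_def coeff_mult_0)
lemma ev0_cst: "ev0 (cst c) = c" by (simp add: ev0_def cst_def)

lemma irr_ideal: "is_ideal (irrelevant :: 'k::field S4 set)"
  unfolding irrelevant_def by (rule ideal_gen_ideal)
lemma irr_x: "x0 \<in> irrelevant" "x1 \<in> irrelevant" "x2 \<in> irrelevant" "x3 \<in> irrelevant"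
  unfolding irrelevant_def using ideal_gen_sub[of "{x0,x1,x2,x3}"] by auto
lemma irr_min: "is_ideal P \<Longrightarrow> x0 \<in> P \<Longrightarrow> x1 \<in> P \<Longrightarrow> x2 \<in> P \<Longrightarrow> x3 \<in> P \<Longrightarrow> irrelevant \<subseteq> P"
  unfolding irrelevant_def by (rule ideal_gen_min) auto

lemma irr_decomp: "f - cst (ev0 f) \<in> (irrelevant :: 'k::field S4 set)"
proof (induction f rule: S4_induct)
  case (1 c) then show ?case by (simp add: ev0_cst ideal_zero irr_ideal)
next
  case 2 then show ?case using irr_x by (simp add: ev0_def x0_def)
next
  case 3 then show ?case using irr_x by (simp add: ev0_def x1_def)
next
  case 4 then show ?case using irr_x by (simp add: ev0_def x2_def)
next
  case 5 then show ?case using irr_x by (simp add: ev0_def x3_def)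
next
  case (6 a b)
  have "a + b - cst (ev0 (a + b)) = (a - cst (ev0 a)) + (b - cst (ev0 b))"
    by (simp add: ev0_add cst_add)
  show ?case by (subst \<open>a + b - cst (ev0 (a + b)) = _\<close>) (rule ideal_add[OF irr_ideal 6])
next
  case (7 a b)
  have "a * b - cst (ev0 (a * b)) = (a - cst (ev0 a)) * b + cst (ev0 a) * (b - cst (ev0 b))"
    by (simp add: ev0_mult cst_mult algebra_simps)
  show ?case by (subst \<open>a * b - cst (ev0 (a * b)) = _\<close>)
      (intro ideal_add[OF irr_ideal] ideal_mult_r[OF irr_ideal] ideal_mult[OF irr_ideal] 7)
qed

lemma prime_not_irr:
  assumes "is_prime_ideal P" "P \<noteq> irrelevant"
  shows "x0 \<notin> P \<or> x1 \<notin> P \<or> x2 \<notin> P \<or> (x3 :: 'k::field S4) \<notin> P"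
proof (rule ccontr)
  assume "\<not> ?thesis"
  then have sub: "irrelevant \<subseteq> P" using assms(1) by (intro irr_min) (auto simp: is_prime_ideal_def)
  have I: "is_ideal P" using assms(1) by (simp add: is_prime_ideal_def)
  obtain f where f: "f \<in> P" "f \<notin> irrelevant" using sub assms(2) by auto
  have "f - cst (ev0 f) \<in> P" using irr_decomp sub by auto
  then have c: "cst (ev0 f) \<in> P" using ideal_diff[OF I f(1)] by fastforce
  have "ev0 f \<noteq> 0" using irr_decomp[of f] f(2) by auto
  then have "1 \<in> P" using ideal_mult[OF I c, of "cst (1 / ev0 f)"] by (simp flip: cst_mult)
  then have "P = UNIV" using ideal_mult_r[OF I, of 1] by auto
  then show False using assms(1) by (simp add: is_prime_ideal_def)
qed

lemma heights:
  fixes X :: "(('k::field \<times> 'k) \<times> ('k \<times> 'k)) set"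
  assumes "finite X" "X \<noteq> {}" "\<forall>p\<in>X. valid_point p"
  shows "ideal_height (points_ideal X) = prime_height (K2 :: 'k S4 set)"
    "\<And>P. is_prime_ideal P \<Longrightarrow> points_ideal X \<subseteq> P \<Longrightarrow>
       local_height (points_ideal X) P = prime_height (K2 :: 'k S4 set)"
proof -
  let ?J = "\<lambda>p. point_ideal (fst p) (snd p) :: 'k S4 set"
  have pr: "is_prime_ideal (?J p)" "prime_height (?J p) = prime_height (K2 :: 'k S4 set)" if "p \<in> X" for p
    using point_prime[of "fst p" "snd p"] assms(3) that by (auto simp: valid_point_def)
  have idl: "\<forall>p\<in>X. is_ideal (?J p)" using pr by (auto simp: is_prime_ideal_def)
  have lb: "prime_height (K2 :: 'k S4 set) \<le> prime_height Q"
    if Q: "is_prime_ideal Q" "points_ideal X \<subseteq> Q" for Q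
  proof -
    obtain p where "p \<in> X" "?J p \<subseteq> Q"
      using prime_avoid[OF assms(1) Q(1) _ idl] Q(2) by (auto simp: points_ideal_def)
    then show ?thesis using height_mono[OF Q(1)] pr by metis
  qed
  obtain p0 where p0: "p0 \<in> X" using assms(2) by auto
  have sub0: "points_ideal X \<subseteq> ?J p0" using p0 by (auto simp: points_ideal_def)
  show "ideal_height (points_ideal X) = prime_height (K2 :: 'k S4 set)"
    unfolding ideal_height_def
  proof (rule antisym)
    show "(INF Q\<in>{Q. is_prime_ideal Q \<and> points_ideal X \<subseteq> Q}. prime_height Q) \<le> prime_height (K2 :: 'k S4 set)"
      using pr[OF p0] sub0 by (intro INF_lower2[of "?J p0"]) auto
    show "prime_height (K2 :: 'k S4 set) \<le> (INF Q\<in>{Q. is_prime_ideal Q \<and> points_ideal X \<subseteq> Q}. prime_height Q)"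
      using lb by (intro INF_greatest) auto
  qed
  fix P assume P: "is_prime_ideal P" "points_ideal X \<subseteq> P"
  obtain p where p: "p \<in> X" "?J p \<subseteq> P"
    using prime_avoid[OF assms(1) P(1) _ idl] P(2) by (auto simp: points_ideal_def)
  have subp: "points_ideal X \<subseteq> ?J p" using p by (auto simp: points_ideal_def)
  show "local_height (points_ideal X) P = prime_height (K2 :: 'k S4 set)"
    unfolding local_height_def
  proof (rule antisym)
    show "(INF Q\<in>{Q. is_prime_ideal Q \<and> points_ideal X \<subseteq> Q \<and> Q \<subseteq> P}. prime_height Q) \<le> prime_height (K2 :: 'k S4 set)"
      using pr[OF p(1)] subp p(2) by (intro INF_lower2[of "?J p"]) auto
    show "prime_height (K2 :: 'k S4 set) \<le> (INF Q\<in>{Q. is_prime_ideal Q \<and> points_ideal X \<subseteq> Q \<and> Q \<subseteq> P}. prime_height Q)"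
      using lb by (intro INF_greatest) auto
  qed
qed



definition NR :: "('k::field \<times> 'k) set" where
  "NR = {p. snd p = 1} \<union> {(1, 0)}"

definition evk :: "'k::field \<times> 'k \<Rightarrow> 'k S4 \<Rightarrow> 'k" where
  "evk p = ev (ev (ev (ev id (fst p)) (snd p)) 0) 0"

lemma rhom_evk: "rhom (evk p)"
  unfolding evk_def by (intro rhom_ev) (simp add: rhom_def)

lemma evk_cst: "evk p (cst c) = c" by (simp add: evk_def cst_def ev_const)
lemma evk_x0: "evk p x0 = fst p" by (simp add: evk_def x0_def ev_const ev_pCons)
lemma evk_x1: "evk p x1 = snd p" by (simp add: evk_def x1_def ev_const ev_pCons)

lemma evk_lin: "evk p (lin x0 x1 b) = snd b * fst p - fst b * snd p"
  by (simp add: lin_def rhom_diff[OF rhom_evk] rhom_mult[OF rhom_evk] evk_cst evk_x0 evk_x1)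

lemma NR_distinct: "b \<in> NR \<Longrightarrow> g \<in> NR \<Longrightarrow> g \<noteq> b \<Longrightarrow> snd g * fst b - fst g * snd b \<noteq> 0"
  by (cases b; cases g) (auto simp: NR_def)

lemma NR_nz: "b \<in> NR \<Longrightarrow> b \<noteq> (0,0)" by (auto simp: NR_def)

lemma lin_const: "lin x0 x1 b = [:coeff (lin x0 x1 b) 0:]"
  by (simp add: lin_def cst_def x0_def x1_def)

lemma x3_dvd: "(x3 :: 'k::field S4) dvd f \<longleftrightarrow> coeff f 0 = 0"
proof
  assume "x3 dvd f" then obtain q where "f = x3 * q" by (auto elim: dvdE)
  then show "coeff f 0 = 0" by (simp add: x3_def coeff_mult_0)
next
  assume "coeff f 0 = 0"
  moreover obtain c q where "f = pCons c q" by (cases f)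
  ultimately have "f = x3 * q" by (simp add: x3_def)
  then show "x3 dvd f" by simp
qed

lemma x3_prime: "(x3 :: 'k::field S4) dvd f * g \<Longrightarrow> x3 dvd f \<or> x3 dvd g"
  by (simp add: x3_dvd coeff_mult_0)

lemma lin_prime:
  assumes "b \<noteq> (0,0)" "lin x0 x1 b dvd f * (g :: 'k::field S4)"
  shows "lin x0 x1 b dvd f \<or> lin x0 x1 b dvd g"
proof -
  let ?s = "subst (\<lambda>i. LC (TM b i))" and ?t = "subst (\<lambda>i. LC (TN b i))"
  have a: "isaut ?s ?t" by (rule T_aut[OF assms(1)])
  have hs: "rhom ?s" "rhom ?t" using a by (auto simp: isaut_def)
  have st: "?s (?t h) = h" "?t (?s h) = h" for h using a by (auto simp: isaut_def)
  have sx: "?s x3 = lin x0 x1 b" by (rule T_img)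
  obtain q where q: "f * g = lin x0 x1 b * q" using assms(2) by (auto elim: dvdE)
  have tl: "?t (lin x0 x1 b) = x3" using st(2)[of x3] unfolding sx .
  have "?t f * ?t g = ?t (f * g)" by (simp only: rhom_mult[OF hs(2)])
  also have "\<dots> = ?t (lin x0 x1 b) * ?t q" by (simp only: q rhom_mult[OF hs(2)])
  finally have "?t f * ?t g = x3 * ?t q" unfolding tl .
  then have "x3 dvd ?t f \<or> x3 dvd ?t g" by (intro x3_prime) (metis dvd_triv_left)
  then show ?thesis
  proof
    assume "x3 dvd ?t f" then obtain w where "?t f = x3 * w" by (auto elim: dvdE)
    then have "f = lin x0 x1 b * ?s w" using arg_cong[of _ _ ?s] st(1)[of f] by (metis rhom_mult hs(1) sx)
    then show ?thesis by simp
  next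
    assume "x3 dvd ?t g" then obtain w where "?t g = x3 * w" by (auto elim: dvdE)
    then have "g = lin x0 x1 b * ?s w" using arg_cong[of _ _ ?s] st(1)[of g] by (metis rhom_mult hs(1) sx)
    then show ?thesis by simp
  qed
qed

lemma prod_lin_dvd:
  assumes "finite B" "B \<subseteq> NR" "\<forall>b\<in>B. lin x0 x1 b dvd (c :: 'k::field S4)"
  shows "(\<Prod>b\<in>B. lin x0 x1 b) dvd c"
  using assms
proof (induction B rule: finite_induct)
  case empty then show ?case by simp
next
  case (insert b B)
  have IH: "(\<Prod>b\<in>B. lin x0 x1 b) dvd c" using insert by auto
  then obtain q where q: "c = (\<Prod>b\<in>B. lin x0 x1 b) * q" by (auto elim: dvdE)
  have bNR: "b \<in> NR" using insert by auto
  have "lin x0 x1 b dvd (\<Prod>b\<in>B. lin x0 x1 b) * q" using insert q by auto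
  then have "lin x0 x1 b dvd (\<Prod>b\<in>B. lin x0 x1 b) \<or> lin x0 x1 b dvd q"
    by (rule lin_prime[OF NR_nz[OF bNR]])
  moreover have "\<not> lin x0 x1 b dvd (\<Prod>b\<in>B. lin x0 x1 b)"
  proof
    assume "lin x0 x1 b dvd (\<Prod>b\<in>B. lin x0 x1 b)"
    then obtain w where w: "(\<Prod>b\<in>B. lin x0 x1 b) = lin x0 x1 b * w" by (auto elim: dvdE)
    have "evk b (\<Prod>b\<in>B. lin x0 x1 b) = 0"
      unfolding w by (simp add: rhom_mult[OF rhom_evk] evk_lin)
    moreover have "evk b (\<Prod>b\<in>B. lin x0 x1 b) \<noteq> 0"
      unfolding rhom_prod[OF rhom_evk] evk_lin
      using insert NR_distinct[of b] by (auto simp: prod_zero_iff)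
    ultimately show False by simp
  qed
  ultimately have "lin x0 x1 b dvd q" by simp
  then show ?case using q insert(1,2) by (auto simp: mult.commute mult_dvd_mono)
qed

lemma canon_memb:
  assumes "finite B" "B \<subseteq> NR"
  shows "(\<Inter>b\<in>B. ideal_gen {x3, lin x0 x1 b}) \<subseteq> ideal_gen {x3 :: 'k::field S4, \<Prod>b\<in>B. lin x0 x1 b}"
proof
  fix g :: "'k S4" assume g: "g \<in> (\<Inter>b\<in>B. ideal_gen {x3, lin x0 x1 b})"
  obtain c q where gq: "g = pCons c q" by (cases g)
  have g0: "g = q * x3 + [:c:]" using gq by (simp add: x3_def)
  have "lin x0 x1 b dvd [:c:]" if bB: "b \<in> B" for b
  proof -
    obtain r s where "g = r * x3 + s * lin x0 x1 b" using g bB by (auto simp: ideal_gen_pair)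
    then have "c = coeff s 0 * coeff (lin x0 x1 b) 0" using gq
      by (metis coeff_add coeff_mult_0 coeff_pCons_0 mult_zero_right x3_dvd dvd_triv_right add_0)
    then have "[:c:] = [:coeff s 0:] * lin x0 x1 b" by (subst lin_const) (simp add: mult.commute)
    then show ?thesis by (metis dvd_triv_right)
  qed
  then have "(\<Prod>b\<in>B. lin x0 x1 b) dvd [:c:]" using prod_lin_dvd[OF assms] by auto
  then obtain w where "[:c:] = (\<Prod>b\<in>B. lin x0 x1 b) * w" by (auto elim: dvdE)
  then have "g = q * x3 + w * (\<Prod>b\<in>B. lin x0 x1 b)" using g0 by (simp add: mult.commute)
  then show "g \<in> ideal_gen {x3, \<Prod>b\<in>B. lin x0 x1 b}" unfolding ideal_gen_pair by blast
qed

lemma memb_transport: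
  assumes a: "isaut \<sigma> \<tau>" and s3: "\<sigma> x3 = L" and sb: "\<And>b. \<sigma> (lin x0 x1 b) = N b"
    and B: "finite B" "B \<subseteq> NR"
  shows "(\<Inter>b\<in>B. ideal_gen {L, N b}) \<subseteq> ideal_gen {L, \<Prod>b\<in>B. N b}"
proof -
  have hs: "rhom \<sigma>" using a by (simp add: isaut_def)
  have "\<sigma> ` (\<Inter>b\<in>B. ideal_gen {x3, lin x0 x1 b}) \<subseteq> \<sigma> ` ideal_gen {x3, \<Prod>b\<in>B. lin x0 x1 b}"
    by (intro image_mono canon_memb B)
  moreover have "\<sigma> ` (\<Inter>b\<in>B. ideal_gen {x3, lin x0 x1 b}) = (\<Inter>b\<in>B. ideal_gen {L, N b})"
    by (simp add: aut_Inter[OF a] aut_ideal_gen[OF a] s3 sb)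
  moreover have "\<sigma> ` ideal_gen {x3, \<Prod>b\<in>B. lin x0 x1 b} = ideal_gen {L, \<Prod>b\<in>B. N b}"
    by (simp add: aut_ideal_gen[OF a] s3 sb rhom_prod[OF hs])
  ultimately show ?thesis by simp
qed

lemma memb_A:
  assumes "a \<noteq> (0,0)" "finite B" "B \<subseteq> NR"
  shows "(\<Inter>b\<in>B. ideal_gen {lin x0 x1 a, lin x2 x3 b}) \<subseteq> ideal_gen {lin x0 x1 a, \<Prod>b\<in>B. lin x2 x3 (b :: 'k::field \<times> 'k)}"
proof (rule memb_transport[OF T_aut[OF assms(1)] _ _ assms(2,3)])
  show "subst (\<lambda>i. LC (TM a i)) x3 = lin x0 x1 a" by (rule T_img)
  fix b :: "'k \<times> 'k"
  show "subst (\<lambda>i. LC (TM a i)) (lin x0 x1 b) = lin x2 x3 b"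
    unfolding lin_def
    by (simp only: rhom_diff[OF rhom_subst] rhom_mult[OF rhom_subst] subst_cst T_img)
qed

lemma memb_B:
  assumes "a \<noteq> (0,0)" "finite B" "B \<subseteq> NR"
  shows "(\<Inter>b\<in>B. ideal_gen {lin x2 x3 a, lin x0 x1 b}) \<subseteq> ideal_gen {lin x2 x3 a, \<Prod>b\<in>B. lin x0 x1 (b :: 'k::field \<times> 'k)}"
proof (rule memb_transport[OF S_aut[OF assms(1)] _ _ assms(2,3)])
  show "subst (\<lambda>i. LC (SM a i)) x3 = lin x2 x3 a" by (rule S_img)
  fix b :: "'k \<times> 'k"
  show "subst (\<lambda>i. LC (SM a i)) (lin x0 x1 b) = lin x0 x1 b"
    unfolding lin_def
    by (simp only: rhom_diff[OF rhom_subst] rhom_mult[OF rhom_subst] subst_cst S_img)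
qed



definition nrm :: "'k::field \<times> 'k \<Rightarrow> 'k \<times> 'k" where
  "nrm p = (if snd p \<noteq> 0 then (fst p / snd p, 1) else (1, 0))"

lemma nrm_NR: "nrm p \<in> NR" by (auto simp: nrm_def NR_def)

lemma lin_scale:
  assumes "p \<noteq> (0,0)"
  shows "\<exists>k. k \<noteq> 0 \<and> lin w0 w1 p = cst k * lin w0 w1 (nrm p)"
proof (cases "snd p = 0")
  case True
  then have "fst p \<noteq> 0" using assms by (cases p) auto
  moreover have "lin w0 w1 p = cst (fst p) * lin w0 w1 (nrm p)"
    using True by (simp add: lin_def nrm_def algebra_simps)
  ultimately show ?thesis by blast
next
  case False
  have "lin w0 w1 p = cst (snd p) * lin w0 w1 (nrm p)"
    using False by (simp add: lin_def nrm_def algebra_simps flip: cst_mult)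
  with False show ?thesis by blast
qed

lemma ideal_gen_scale:
  fixes f g :: "'k::field S4"
  assumes "k \<noteq> 0" "m \<noteq> 0"
  shows "ideal_gen {cst k * f, cst m * g} = ideal_gen {f, g}"
proof (rule set_eqI)
  fix x :: "'k S4"
  have ik: "cst (1/k) * cst k = (1 :: 'k S4)" "cst (1/m) * cst m = (1 :: 'k S4)"
    using assms by (simp_all flip: cst_mult)
  show "x \<in> ideal_gen {cst k * f, cst m * g} \<longleftrightarrow> x \<in> ideal_gen {f, g}"
    unfolding ideal_gen_pair
  proof
    assume "\<exists>r s. x = r * (cst k * f) + s * (cst m * g)"
    then obtain r s where "x = r * (cst k * f) + s * (cst m * g)" by auto
    then have "x = (r * cst k) * f + (s * cst m) * g" by (simp add: mult.assoc)
    then show "\<exists>r s. x = r * f + s * g" by blast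
  next
    assume "\<exists>r s. x = r * f + s * g"
    then obtain r s where x: "x = r * f + s * g" by auto
    have e1: "(r * cst (1/k)) * (cst k * f) = r * f"
    proof -
      have "(r * cst (1/k)) * (cst k * f) = r * (cst (1/k) * cst k) * f" by (simp only: mult.assoc)
      then show ?thesis using ik by simp
    qed
    have e2: "(s * cst (1/m)) * (cst m * g) = s * g"
    proof -
      have "(s * cst (1/m)) * (cst m * g) = s * (cst (1/m) * cst m) * g" by (simp only: mult.assoc)
      then show ?thesis using ik by simp
    qed
    have "x = (r * cst (1/k)) * (cst k * f) + (s * cst (1/m)) * (cst m * g)"
      unfolding x e1 e2 ..
    then show "\<exists>r s. x = r * (cst k * f) + s * (cst m * g)" by blast
  qed
qed

lemma lin_prop:
  assumes P: "is_ideal P" and a: "lin u0 u1 a \<in> P" "a \<noteq> (0,0)" and b: "lin u0 u1 b \<in> P" "b \<noteq> (0,0)"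
    and u: "u0 \<notin> P \<or> u1 \<notin> P"
  shows "\<exists>k. k \<noteq> 0 \<and> lin u0 u1 b = cst k * lin u0 u1 (a :: 'k::field \<times> 'k)"
proof -
  obtain a0 a1 where ae: "a = (a0, a1)" by (cases a)
  obtain b0 b1 where be: "b = (b0, b1)" by (cases b)
  define d where "d = a1 * b0 - a0 * b1"
  have e0: "cst b0 * lin u0 u1 a - cst a0 * lin u0 u1 b = cst d * u0"
    by (simp add: ae be d_def lin_def cst_mult cst_diff algebra_simps)
  have e1: "cst b1 * lin u0 u1 a - cst a1 * lin u0 u1 b = cst d * u1"
    by (simp add: ae be d_def lin_def cst_mult cst_diff algebra_simps)
  have "d = 0"
  proof (rule ccontr)
    assume "d \<noteq> 0"
    then have inv: "cst (1/d) * cst d = (1 :: 'k S4)" by (simp flip: cst_mult)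
    have "cst d * u0 \<in> P" "cst d * u1 \<in> P" unfolding e0[symmetric] e1[symmetric]
      using a b P by (auto intro!: ideal_diff ideal_mult)
    then have "cst (1/d) * (cst d * u0) \<in> P" "cst (1/d) * (cst d * u1) \<in> P"
      using P by (auto intro: ideal_mult)
    then have "u0 \<in> P" "u1 \<in> P" using inv by (simp_all add: mult.assoc[symmetric])
    then show False using u by simp
  qed
  show ?thesis
  proof (cases "a1 = 0")
    case False
    define k where "k = b1 / a1"
    have k1: "b1 = k * a1" using False by (simp add: k_def)
    have k0: "b0 = k * a0" using False \<open>d = 0\<close> by (simp add: k_def d_def field_simps)
    have "k \<noteq> 0" using b(2) k0 k1 be by auto
    moreover have "lin u0 u1 b = cst k * lin u0 u1 a"
      by (simp add: ae be k0 k1 lin_def cst_mult algebra_simps)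
    ultimately show ?thesis by blast
  next
    case True
    then have a0: "a0 \<noteq> 0" using a(2) ae by auto
    define k where "k = b0 / a0"
    have k0: "b0 = k * a0" using a0 by (simp add: k_def)
    have k1: "b1 = k * a1" using True a0 \<open>d = 0\<close> by (simp add: k_def d_def field_simps)
    have "k \<noteq> 0" using b(2) k0 k1 be by auto
    moreover have "lin u0 u1 b = cst k * lin u0 u1 a"
      by (simp add: ae be k0 k1 lin_def cst_mult algebra_simps)
    ultimately show ?thesis by blast
  qed
qed

lemma prod_notin:
  assumes "is_prime_ideal P" "finite S" "\<forall>s\<in>S. f s \<notin> P"
  shows "prod f S \<notin> P"
  using assms(2,3)
proof (induction S rule: finite_induct)
  case empty
  have "1 \<notin> P"
  proof
    assume "1 \<in> P"
    then have "r \<in> P" for r using ideal_mult[of P 1 r] assms(1) by (simp add: is_prime_ideal_def)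
    then show False using assms(1) by (auto simp: is_prime_ideal_def)
  qed
  then show ?case by simp
next
  case (insert x S)
  then show ?case using assms(1) by (auto simp: is_prime_ideal_def)
qed



lemma local_gen:
  fixes X :: "(('k::field \<times> 'k) \<times> ('k \<times> 'k)) set"
    and A Bp :: "('k \<times> 'k) \<times> ('k \<times> 'k) \<Rightarrow> 'k \<times> 'k" and ua ub wa wb :: "'k S4"
  assumes X: "finite X" and nz: "\<forall>p\<in>X. A p \<noteq> (0,0) \<and> Bp p \<noteq> (0,0)"
    and J: "\<forall>p\<in>X. point_ideal (fst p) (snd p) = ideal_gen {lin ua ub (A p), lin wa wb (Bp p)}"
    and memb: "\<And>a B. a \<noteq> (0,0) \<Longrightarrow> finite B \<Longrightarrow> B \<subseteq> NR \<Longrightarrow>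
        (\<Inter>b\<in>B. ideal_gen {lin ua ub a, lin wa wb b}) \<subseteq> ideal_gen {lin ua ub a, \<Prod>b\<in>B. lin wa wb b}"
    and u: "ua \<notin> P \<or> ub \<notin> P" and P: "is_prime_ideal P" "points_ideal X \<subseteq> P" and c: "2 \<le> c"
  shows "\<exists>F. finite F \<and> card F \<le> c \<and> F \<subseteq> points_ideal X \<and>
           (\<forall>g\<in>points_ideal X. \<exists>t. t \<notin> P \<and> t * g \<in> ideal_gen F)"
proof -
  let ?J = "\<lambda>p. point_ideal (fst p) (snd p) :: 'k S4 set"
  let ?U = "\<lambda>a. lin ua ub a" and ?V = "\<lambda>b. lin wa wb b"
  have PI: "is_ideal P" using P(1) by (simp add: is_prime_ideal_def)
  have idl: "\<forall>p\<in>X. is_ideal (?J p)" by (simp add: point_ideal_def ideal_gen_ideal)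
  obtain p0 where p0: "p0 \<in> X" "?J p0 \<subseteq> P"
    using prime_avoid[OF X P(1) _ idl] P(2) by (auto simp: points_ideal_def)
  define al where "al = A p0"
  have al_nz: "al \<noteq> (0,0)" using nz p0 by (simp add: al_def)
  have Ual: "?U al \<in> P" using p0 J ideal_gen_sub[of "{?U al, ?V (Bp p0)}"] by (auto simp: al_def)
  define X1 where "X1 = {p\<in>X. ?U (A p) \<in> P}"
  define X2 where "X2 = X - X1"
  define T where "T = (\<Prod>p\<in>X2. ?U (A p))"
  define B where "B = nrm ` Bp ` X1"
  define PB where "PB = (\<Prod>b\<in>B. ?V b)"
  define F where "F = {T * ?U al, T * PB}"
  have finX: "finite X1" "finite X2" using X by (auto simp: X1_def X2_def)
  have finB: "finite B" using finX by (simp add: B_def)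
  have BNR: "B \<subseteq> NR" unfolding B_def by (auto simp: nrm_NR)
  have TP: "T \<notin> P" unfolding T_def using P(1) finX by (intro prod_notin) (auto simp: X1_def X2_def)
  have eqJ: "?J p = ideal_gen {?U al, ?V (nrm (Bp p))}" if p: "p \<in> X1" for p
  proof -
    have pX: "p \<in> X" "?U (A p) \<in> P" using p by (auto simp: X1_def)
    obtain k where k: "k \<noteq> 0" "?U (A p) = cst k * ?U al"
      using lin_prop[OF PI Ual al_nz pX(2) _ u] nz pX by auto
    obtain m where m: "m \<noteq> 0" "?V (Bp p) = cst m * ?V (nrm (Bp p))"
      using lin_scale[of "Bp p" wa wb] nz pX by auto
    show ?thesis using J pX k m ideal_gen_scale[OF k(1) m(1)] by simp
  qed
  have FI: "F \<subseteq> points_ideal X"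
  proof
    fix f assume fF: "f \<in> F"
    show "f \<in> points_ideal X" unfolding points_ideal_def
    proof
      fix p assume pX: "p \<in> X"
      have Jp: "is_ideal (?J p)" using idl pX by auto
      show "f \<in> ?J p"
      proof (cases "p \<in> X1")
        case True
        have g1: "?U al \<in> ?J p" "?V (nrm (Bp p)) \<in> ?J p"
          using eqJ[OF True] ideal_gen_sub[of "{?U al, ?V (nrm (Bp p))}"] by auto
        have "nrm (Bp p) \<in> B" using True by (simp add: B_def)
        then have "PB = ?V (nrm (Bp p)) * (\<Prod>b\<in>B - {nrm (Bp p)}. ?V b)"
          unfolding PB_def using finB by (simp add: prod.remove)
        then have "PB \<in> ?J p" using g1 Jp by (simp add: ideal_mult_r)
        then show ?thesis using fF g1 Jp unfolding F_def by (auto intro: ideal_mult)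
      next
        case False
        then have p2: "p \<in> X2" using pX by (simp add: X2_def)
        have "?U (A p) \<in> ?J p" using J pX ideal_gen_sub[of "{?U (A p), ?V (Bp p)}"] by auto
        moreover have "T = ?U (A p) * (\<Prod>q\<in>X2 - {p}. ?U (A q))"
          unfolding T_def using finX p2 by (simp add: prod.remove)
        ultimately have "T \<in> ?J p" using Jp by (simp add: ideal_mult_r)
        then show ?thesis using fF Jp unfolding F_def by (auto intro: ideal_mult_r)
      qed
    qed
  qed
  have loc: "\<exists>t. t \<notin> P \<and> t * g \<in> ideal_gen F" if g: "g \<in> points_ideal X" for g
  proof -
    have "g \<in> (\<Inter>b\<in>B. ideal_gen {?U al, ?V b})"
    proof
      fix b assume "b \<in> B"
      then obtain p where p: "p \<in> X1" "b = nrm (Bp p)" by (auto simp: B_def)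
      have "g \<in> ?J p" using g p by (auto simp: points_ideal_def X1_def)
      then show "g \<in> ideal_gen {?U al, ?V b}" using eqJ[OF p(1)] p(2) by simp
    qed
    then have "g \<in> ideal_gen {?U al, PB}" using memb[OF al_nz finB BNR] unfolding PB_def by auto
    then obtain r s where "g = r * ?U al + s * PB" by (auto simp: ideal_gen_pair)
    then have "T * g = r * (T * ?U al) + s * (T * PB)" by (simp add: algebra_simps)
    then have "T * g \<in> ideal_gen F" unfolding F_def ideal_gen_pair by blast
    then show ?thesis using TP by blast
  qed
  have "card F \<le> 2" unfolding F_def by (simp add: card_insert_le_m1)
  then have "card F \<le> c" using c by simp
  moreover have "finite F" by (simp add: F_def)
  ultimately show ?thesis using FI loc by blast
qed

theorem lemma4p1:
  fixes X :: "(('k::{alg_closed_field, field_char_0} \<times> 'k) \<times> ('k \<times> 'k)) set"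
  assumes "finite X"
    and "\<forall>p\<in>X. valid_point p"
  shows "lci (points_ideal X)"
proof (cases "X = {}")
  case True
  have pU: "points_ideal X = UNIV" using True by (simp add: points_ideal_def)
  have E: "{Q. is_prime_ideal Q \<and> (UNIV :: 'k S4 set) \<subseteq> Q} = {}"
    by (auto simp: is_prime_ideal_def)
  have "ideal_height (UNIV :: 'k S4 set) = \<infinity>"
    unfolding ideal_height_def E by (simp add: top_enat_def)
  then show ?thesis by (simp add: lci_def pU)
next
  case False
  note hs = heights[OF assms(1) False assms(2)]
  show ?thesis unfolding lci_def
  proof (intro allI impI)
    fix c P assume hc: "ideal_height (points_ideal X) = enat c"
      and PP: "is_prime_ideal P \<and> P \<noteq> irrelevant \<and> points_ideal X \<subseteq> P"
    have h: "prime_height (K2 :: 'k S4 set) = enat c" using hs(1) hc by simp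
    have c2: "2 \<le> c" using height_K2[where 'k='k] h by simp
    have lh: "local_height (points_ideal X) P = enat c" using hs(2)[of P] PP h by simp
    have nz: "\<forall>p\<in>X. fst p \<noteq> (0,0) \<and> snd p \<noteq> (0,0)" using assms(2) by (simp add: valid_point_def)
    have P1: "is_prime_ideal P" and P2: "points_ideal X \<subseteq> P" using PP by auto
    have JA: "\<forall>p\<in>X. point_ideal (fst p) (snd p) = ideal_gen {lin x0 x1 (fst p), lin x2 x3 (snd p)}"
      by (simp add: point_ideal_lin)
    have JB: "\<forall>p\<in>X. point_ideal (fst p) (snd p) = ideal_gen {lin x2 x3 (snd p), lin x0 x1 (fst p)}"
      by (simp add: point_ideal_lin insert_commute)
    have nzB: "\<forall>p\<in>X. snd p \<noteq> (0,0) \<and> fst p \<noteq> (0,0)" using nz by auto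
    have "(x0 \<notin> P \<or> x1 \<notin> P) \<or> (x2 \<notin> P \<or> (x3 :: 'k S4) \<notin> P)" using prime_not_irr PP by blast
    then have "\<exists>F. finite F \<and> card F \<le> c \<and> F \<subseteq> points_ideal X \<and>
           (\<forall>g\<in>points_ideal X. \<exists>t. t \<notin> P \<and> t * g \<in> ideal_gen F)"
    proof
      assume u: "x0 \<notin> P \<or> x1 \<notin> P"
      show ?thesis
        by (rule local_gen[where A=fst and Bp=snd and ua=x0 and ub=x1 and wa=x2 and wb=x3,
              OF assms(1) nz JA memb_A u P1 P2 c2])
    next
      assume u: "x2 \<notin> P \<or> x3 \<notin> P"
      show ?thesis
        by (rule local_gen[where A=snd and Bp=fst and ua=x2 and ub=x3 and wa=x0 and wb=x1,
              OF assms(1) nzB JB memb_B u P1 P2 c2])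
    qed
    then show "local_ci (points_ideal X) P c" using lh by (simp add: local_ci_def)
  qed
qed


end
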